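(* Let $a,b,c,d\in\mathbb C$ and $$f=a(2x_1-x_2-x_3)(2x_2-x_3-x_1)(2x_3-x_1-x_2)+b(x_1-x_2)(x_2-x_3)(x_3-x_1)+c(x_1+x_2+x_3)^3+d(x_1^3+x_2^3+x_3^3-3x_1x_2x_3).$$ Then $f$ is completely reducible (a product of three linear forms) if and only if $a=b=c=0$ or $(27a^2+b^2)c+d^3=0$. In the first case, $$f=d(x_1+x_2+x_3)(x_1+\omega x_2+\omega^2x_3)(x_1+\omega^2x_2+\omega x_3).$$ In the second case, there exist $\alpha_1,\alpha_2,\gamma\in\mathbb C$ with $$\alpha_1^3=9a-i\sqrt3\,b,\quad \alpha_2^3=9a+i\sqrt3\,b,\quad -\alpha_1\alpha_2\gamma=3d,\quad \gamma^3=9c,$$ and for any such $\alpha_1,\alpha_2,\gamma$ we have $9f=A_xB_xC_x$, where $$A_x=\alpha_1(x_1+\omega^2x_2+\omega x_3)+\gamma(x_1+x_2+x_3)+\alpha_2(x_1+\omega x_2+\omega^2x_3),$$ $$B_x=\alpha_1(\omega^2x_1+\omega x_2+x_3)+\gamma(x_1+x_2+x_3)+\alpha_2(\omega x_1+\omega^2x_2+x_3),$$ $$C_x=\alpha_1(\omega x_1+x_2+\omega^2x_3)+\gamma(x_1+x_2+x_3)+\alpha_2(\omega^2x_1+x_2+\omega x_3).$$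
   Context: $\omega=e^{2\pi i/3}$. Every ternary cubic form over $\mathbb C$ invariant under even permutations of $x_1,x_2,x_3$ can be written in the displayed form. *)

theory Defs
  imports Complex_Main
begin

definition omega :: complex where
  "omega = exp (2 * pi * \<i> / 3)"

definition cubicf :: "complex \<Rightarrow> complex \<Rightarrow> complex \<Rightarrow> complex \<Rightarrow>
    complex \<Rightarrow> complex \<Rightarrow> complex \<Rightarrow> complex" where
  "cubicf a b c d x1 x2 x3 =
     a * (2*x1 - x2 - x3) * (2*x2 - x3 - x1) * (2*x3 - x1 - x2)
   + b * (x1 - x2) * (x2 - x3) * (x3 - x1)
   + c * (x1 + x2 + x3) ^ 3
   + d * (x1 ^ 3 + x2 ^ 3 + x3 ^ 3 - 3 * x1 * x2 * x3)"

text \<open>A ternary form over C is completely reducible if it is a product of three linear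
  forms. Since C is infinite, equality of polynomials is equality as functions.\<close>
definition completely_reducible ::
    "(complex \<Rightarrow> complex \<Rightarrow> complex \<Rightarrow> complex) \<Rightarrow> bool" where
  "completely_reducible F \<longleftrightarrow>
     (\<exists>u1 u2 u3 v1 v2 v3 w1 w2 w3 :: complex. \<forall>x1 x2 x3.
        F x1 x2 x3 = (u1*x1 + u2*x2 + u3*x3) * (v1*x1 + v2*x2 + v3*x3) * (w1*x1 + w2*x2 + w3*x3))"

end

theory Submission
  imports Defs
begin


lemma omega_eq: "omega = Complex (-1/2) (sqrt 3/2)"
proof -
  have "omega = cis (2*pi/3)" unfolding omega_def cis_conv_exp
    by (simp add: field_simps)
  also have "\<dots> = Complex (-1/2) (sqrt 3/2)"
    by (simp add: complex_eq_iff cos_120 sin_120)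
  finally show ?thesis .
qed

lemma om: "omega^2 + omega + 1 = 0"
  by (simp add: omega_eq complex_eq_iff power2_eq_square)

lemma isq: "\<i> * complex_of_real (sqrt 3) = 1 + 2*omega"
  by (simp add: omega_eq complex_eq_iff)

lemma key: "9*cubicf a b c d x1 x2 x3 =
   (9*a - (1+2*omega)*b) * (x1 + omega^2*x2 + omega*x3)^3
 + (9*a + (1+2*omega)*b) * (x1 + omega*x2 + omega^2*x3)^3
 + 9*c*(x1+x2+x3)^3
 + 9*d*(x1 + omega*x2 + omega^2*x3)*(x1 + omega^2*x2 + omega*x3)*(x1+x2+x3)"
  unfolding cubicf_def using om by algebra

lemma triple: "(u + v + w)*(omega^2*u + v + omega*w)*(omega*u+v+omega^2*w) = u^3+v^3+w^3-3*u*v*w"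
  using om by algebra

lemma cuberoot: "\<exists>y::complex. y^3 = z"
proof (cases "z = 0")
  case True then show ?thesis by (intro exI[of _ 0]) simp
next
  case False
  have 1: "(1::complex) \<in> {y. y^3 = 1}" by simp
  have "(\<lambda>y. complex_of_real (root 3 (norm z)) * cis (Arg z / real 3) * y) 1 \<in> {y. y^3 = z}"
    by (rule bij_betw_apply[OF bij_betw_nth_root_unity[OF False, of 3] 1]) simp
  then show ?thesis by auto
qed


lemma coeffs:
  fixes U1 U2 U3 V1 V2 V3 W1 W2 W3 al be ga de :: complex
  assumes H: "\<And>X Y Z. be*X^3+al*Y^3+ga*Z^3+de*X*Y*Z = (U1*X+V1*Y+W1*Z)*(U2*X+V2*Y+W2*Z)*(U3*X+V3*Y+W3*Z)"
  shows "U1*U2*U3 = be" "V1*V2*V3 = al" "W1*W2*W3 = ga"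
   "U1*U2*V3+U1*V2*U3+V1*U2*U3 = 0"
   "U1*V2*V3+V1*U2*V3+V1*V2*U3 = 0"
   "U1*U2*W3+U1*W2*U3+W1*U2*U3 = 0"
   "U1*W2*W3+W1*U2*W3+W1*W2*U3 = 0"
   "V1*V2*W3+V1*W2*V3+W1*V2*V3 = 0"
   "V1*W2*W3+W1*V2*W3+W1*W2*V3 = 0"
   "U1*V2*W3+U1*W2*V3+V1*U2*W3+V1*W2*U3+W1*U2*V3+W1*V2*U3 = de"
proof -
  have a1: "U1*U2*U3 = be" using H[of 1 0 0] by simp
  have a2: "V1*V2*V3 = al" using H[of 0 1 0] by simp
  have a3: "W1*W2*W3 = ga" using H[of 0 0 1] by simp
  have b1: "be+al = (U1+V1)*(U2+V2)*(U3+V3)" using H[of 1 1 0] by simp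
  have b2: "be-al = (U1-V1)*(U2-V2)*(U3-V3)" using H[of 1 "-1" 0] by simp
  have c1: "be+ga = (U1+W1)*(U2+W2)*(U3+W3)" using H[of 1 0 1] by simp
  have c2: "be-ga = (U1-W1)*(U2-W2)*(U3-W3)" using H[of 1 0 "-1"] by simp
  have d1: "al+ga = (V1+W1)*(V2+W2)*(V3+W3)" using H[of 0 1 1] by simp
  have d2: "al-ga = (V1-W1)*(V2-W2)*(V3-W3)" using H[of 0 1 "-1"] by simp
  have e1: "be+al+ga+de = (U1+V1+W1)*(U2+V2+W2)*(U3+V3+W3)" using H[of 1 1 1] by simp
  show "U1*U2*U3 = be" "V1*V2*V3 = al" "W1*W2*W3 = ga" by fact+
  have "2*(U1*U2*V3+U1*V2*U3+V1*U2*U3) = 0" using b1 b2 unfolding a1[symmetric] a2[symmetric] by algebra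
  then show f4: "U1*U2*V3+U1*V2*U3+V1*U2*U3 = 0" by (subst (asm) mult_eq_0_iff) simp
  have "2*(U1*V2*V3+V1*U2*V3+V1*V2*U3) = 0" using b1 b2 unfolding a1[symmetric] a2[symmetric] by algebra
  then show f5: "U1*V2*V3+V1*U2*V3+V1*V2*U3 = 0" by (subst (asm) mult_eq_0_iff) simp
  have "2*(U1*U2*W3+U1*W2*U3+W1*U2*U3) = 0" using c1 c2 unfolding a1[symmetric] a3[symmetric] by algebra
  then show f6: "U1*U2*W3+U1*W2*U3+W1*U2*U3 = 0" by (subst (asm) mult_eq_0_iff) simp
  have "2*(U1*W2*W3+W1*U2*W3+W1*W2*U3) = 0" using c1 c2 unfolding a1[symmetric] a3[symmetric] by algebra
  then show f7: "U1*W2*W3+W1*U2*W3+W1*W2*U3 = 0" by (subst (asm) mult_eq_0_iff) simp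
  have "2*(V1*V2*W3+V1*W2*V3+W1*V2*V3) = 0" using d1 d2 unfolding a2[symmetric] a3[symmetric] by algebra
  then show f8: "V1*V2*W3+V1*W2*V3+W1*V2*V3 = 0" by (subst (asm) mult_eq_0_iff) simp
  have "2*(V1*W2*W3+W1*V2*W3+W1*W2*V3) = 0" using d1 d2 unfolding a2[symmetric] a3[symmetric] by algebra
  then show f9: "V1*W2*W3+W1*V2*W3+W1*W2*V3 = 0" by (subst (asm) mult_eq_0_iff) simp
  show "U1*V2*W3+U1*W2*V3+V1*U2*W3+V1*W2*U3+W1*U2*V3+W1*V2*U3 = de"
    using f4 f5 f6 f7 f8 f9 e1 unfolding a1[symmetric] a2[symmetric] a3[symmetric] by algebra
qed

lemma core6:
  fixes r1 r2 r3 t1 t2 t3 :: complex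
  assumes "r1+r2+r3=0" "t1+t2+t3=0" "r1*r2+r1*r3+r2*r3=0" "t1*t2+t1*t3+t2*t3=0"
   "r1*r2*t3+r1*r3*t2+r2*r3*t1=0" "r1*t2*t3+r2*t1*t3+r3*t1*t2=0"
  shows "(r1*t1+r2*t2+r3*t3)^3 = 27*(r1*r2*r3)*(t1*t2*t3)"
  using assms by algebra

lemma core:
  fixes U1 U2 U3 V1 V2 V3 W1 W2 W3 al be ga de :: complex
  assumes h1: "U1*U2*U3 = be" and h2: "V1*V2*V3 = al" and h3: "W1*W2*W3 = ga"
   and h4: "U1*U2*V3+U1*V2*U3+V1*U2*U3 = 0"
   and h5: "U1*V2*V3+V1*U2*V3+V1*V2*U3 = 0"
   and h6: "U1*U2*W3+U1*W2*U3+W1*U2*U3 = 0"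
   and h7: "U1*W2*W3+W1*U2*W3+W1*W2*U3 = 0"
   and h8: "V1*V2*W3+V1*W2*V3+W1*V2*V3 = 0"
   and h9: "V1*W2*W3+W1*V2*W3+W1*W2*V3 = 0"
   and h10: "U1*V2*W3+U1*W2*V3+V1*U2*W3+V1*W2*U3+W1*U2*V3+W1*V2*U3 = de"
   and nz: "be \<noteq> 0"
  shows "27*al*be*ga + de^3 = 0"
proof -
  have u: "U1 \<noteq> 0" "U2 \<noteq> 0" "U3 \<noteq> 0" using h1 nz by auto
  define r1 r2 r3 t1 t2 t3 where "r1 = V1/U1" "r2 = V2/U2" "r3 = V3/U3"
    "t1 = W1/U1" "t2 = W2/U2" "t3 = W3/U3"
  have V: "V1 = r1*U1" "V2 = r2*U2" "V3 = r3*U3" "W1 = t1*U1" "W2 = t2*U2" "W3 = t3*U3"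
    using u by (simp_all add: r1_r2_r3_t1_t2_t3_def)
  have e4: "be*(r1+r2+r3) = 0" using h4 unfolding V h1[symmetric] by algebra
  have e5: "be*(r1*r2+r1*r3+r2*r3) = 0" using h5 unfolding V h1[symmetric] by algebra
  have e6: "be*(t1+t2+t3) = 0" using h6 unfolding V h1[symmetric] by algebra
  have e7: "be*(t1*t2+t1*t3+t2*t3) = 0" using h7 unfolding V h1[symmetric] by algebra
  have e8: "be*(r1*r2*t3+r1*r3*t2+r2*r3*t1) = 0" using h8 unfolding V h1[symmetric] by algebra
  have e9: "be*(r1*t2*t3+r2*t1*t3+r3*t1*t2) = 0" using h9 unfolding V h1[symmetric] by algebra
  have al: "al = be*(r1*r2*r3)" using h2 unfolding V h1[symmetric] by (simp add: mult_ac)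
  have ga: "ga = be*(t1*t2*t3)" using h3 unfolding V h1[symmetric] by (simp add: mult_ac)
  have de: "de = be*((r1+r2+r3)*(t1+t2+t3) - (r1*t1+r2*t2+r3*t3))"
    unfolding h10[symmetric] h1[symmetric] unfolding V by algebra
  have c6: "(r1*t1+r2*t2+r3*t3)^3 = 27*(r1*r2*r3)*(t1*t2*t3)"
    apply (rule core6) using e4 e5 e6 e7 e8 e9 nz by simp_all
  have s: "r1+r2+r3 = 0" "t1+t2+t3=0" using e4 e6 nz by simp_all
  show ?thesis unfolding al ga de s using c6 by algebra
qed


lemma nec:
  assumes F: "\<forall>x1 x2 x3. cubicf a b c d x1 x2 x3 = (u1*x1+u2*x2+u3*x3)*(v1*x1+v2*x2+v3*x3)*(w1*x1+w2*x2+w3*x3)"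
  shows "(a=0 \<and> b=0 \<and> c=0) \<or> (27*a^2+b^2)*c+d^3=0"
proof -
  define k where "k = 1+2*omega"
  have k2: "k^2 = -3" using om unfolding k_def by algebra
  define P where "P = 9*a - k*b"
  define Q where "Q = 9*a + k*b"
  define U1 where "U1 = u1+omega^2*u2+omega*u3"
  define V1 where "V1 = u1+omega*u2+omega^2*u3"
  define W1 where "W1 = u1+u2+u3"
  define U2 where "U2 = v1+omega^2*v2+omega*v3"
  define V2 where "V2 = v1+omega*v2+omega^2*v3"
  define W2 where "W2 = v1+v2+v3"
  define U3 where "U3 = w1+omega^2*w2+omega*w3"
  define V3 where "V3 = w1+omega*w2+omega^2*w3"
  define W3 where "W3 = w1+w2+w3"
  have H: "(3*Q)*X^3+(3*P)*Y^3+(27*c)*Z^3+(27*d)*X*Y*Z = (U1*X+V1*Y+W1*Z)*(U2*X+V2*Y+W2*Z)*(U3*X+V3*Y+W3*Z)"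
    for X Y Z
  proof -
    define x1 where "x1 = (Z+X+Y)/3"
    define x2 where "x2 = (Z+omega^2*X+omega*Y)/3"
    define x3 where "x3 = (Z+omega*X+omega^2*Y)/3"
    have e1: "3*x1 = Z+X+Y" "3*x2 = Z+omega^2*X+omega*Y" "3*x3 = Z+omega*X+omega^2*Y"
      by (simp_all add: x1_def x2_def x3_def)
    have "3*(x1 + omega*x2 + omega^2*x3) = 3*X" using e1 om by algebra
    then have hp: "x1 + omega*x2 + omega^2*x3 = X" by (subst (asm) mult_left_cancel) simp_all
    have "3*(x1 + omega^2*x2 + omega*x3) = 3*Y" using e1 om by algebra
    then have hq: "x1 + omega^2*x2 + omega*x3 = Y" by (subst (asm) mult_left_cancel) simp_all
    have "3*(x1 + x2 + x3) = 3*Z" using e1 om by algebra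
    then have hs: "x1 + x2 + x3 = Z" by (subst (asm) mult_left_cancel) simp_all
    have l1: "3*(u1*x1+u2*x2+u3*x3) = U1*X+V1*Y+W1*Z"
      unfolding U1_def V1_def W1_def using e1 om by algebra
    have l2: "3*(v1*x1+v2*x2+v3*x3) = U2*X+V2*Y+W2*Z"
      unfolding U2_def V2_def W2_def using e1 om by algebra
    have l3: "3*(w1*x1+w2*x2+w3*x3) = U3*X+V3*Y+W3*Z"
      unfolding U3_def V3_def W3_def using e1 om by algebra
    have K: "9*cubicf a b c d x1 x2 x3 = P*Y^3 + Q*X^3 + 9*c*Z^3 + 9*d*X*Y*Z"
      using key[of a b c d x1 x2 x3, unfolded hp hq hs] unfolding P_def Q_def k_def
      by (simp add: ac_simps)
    have F': "cubicf a b c d x1 x2 x3 = (u1*x1+u2*x2+u3*x3)*(v1*x1+v2*x2+v3*x3)*(w1*x1+w2*x2+w3*x3)"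
      using F by simp
    show ?thesis unfolding l1[symmetric] l2[symmetric] l3[symmetric]
      using K[unfolded F'] by algebra
  qed
  note cf = coeffs[OF H]
  have main: "27*(3*P)*(3*Q)*(27*c) + (27*d)^3 = 0" if nz: "\<not>(P = 0 \<and> Q = 0 \<and> c = 0)"
  proof -
    consider "3*Q \<noteq> 0" | "3*P \<noteq> 0" | "27*c \<noteq> 0" using nz by auto
    then show ?thesis
    proof cases
      case 1
      have "27*(3*P)*(3*Q)*(27*c) + (27*d)^3 = 0"
        by (rule core[OF cf(1-10) 1])
      then show ?thesis by (simp add: ac_simps)
    next
      case 2
      have "27*(3*Q)*(3*P)*(27*c) + (27*d)^3 = 0"
        apply (rule core[of V1 V2 V3 "3*P" U1 U2 U3 "3*Q" W1 W2 W3 "27*c" "27*d"])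
        using cf 2 by (simp_all add: algebra_simps)
      then show ?thesis by (simp add: ac_simps)
    next
      case 3
      have "27*(3*P)*(27*c)*(3*Q) + (27*d)^3 = 0"
        apply (rule core[of W1 W2 W3 "27*c" V1 V2 V3 "3*P" U1 U2 U3 "3*Q" "27*d"])
        using cf 3 by (simp_all add: algebra_simps)
      then show ?thesis by (simp add: ac_simps)
    qed
  qed
  show ?thesis
  proof (cases "P = 0 \<and> Q = 0 \<and> c = 0")
    case True
    then have "18*a = 0" "2*k*b = 0" unfolding P_def Q_def by algebra+
    moreover have "k \<noteq> 0" using k2 by auto
    ultimately show ?thesis using True by auto
  next
    case False
    from main[OF False] have "19683*((27*a^2+b^2)*c+d^3) = 0"
      unfolding P_def Q_def using k2 by algebra
    then show ?thesis by (subst (asm) mult_eq_0_iff) simp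
  qed
qed


lemma partA:
  "cubicf 0 0 0 d x1 x2 x3 = d * (x1 + x2 + x3) * (x1 + omega * x2 + omega^2 * x3) * (x1 + omega^2 * x2 + omega * x3)"
proof -
  have "9*cubicf 0 0 0 d x1 x2 x3 = 9*(d * (x1 + x2 + x3) * (x1 + omega * x2 + omega^2 * x3) * (x1 + omega^2 * x2 + omega * x3))"
    using key[of 0 0 0 d x1 x2 x3] by (simp add: ac_simps)
  then show ?thesis by (subst (asm) mult_left_cancel) simp_all
qed

lemma aux:
  fixes K9 :: complex
  assumes "K9 = P*q^3 + Q*p^3 + 9*c*s^3 + 9*d*p*q*s" "\<alpha>1^3 = P" "\<alpha>2^3 = Q"
    "- \<alpha>1 * \<alpha>2 * \<gamma> = 3*d" "\<gamma>^3 = 9*c"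
  shows "K9 = (\<alpha>1*q)^3+(\<gamma>*s)^3+(\<alpha>2*p)^3-3*(\<alpha>1*q)*(\<gamma>*s)*(\<alpha>2*p)"
proof -
  have "(\<alpha>1*q)^3+(\<gamma>*s)^3+(\<alpha>2*p)^3-3*(\<alpha>1*q)*(\<gamma>*s)*(\<alpha>2*p)
      = \<alpha>1^3*q^3+\<gamma>^3*s^3+\<alpha>2^3*p^3+3*(-\<alpha>1*\<alpha>2*\<gamma>)*p*q*s"
    by (simp add: power_mult_distrib algebra_simps)
  also have "\<dots> = P*q^3 + Q*p^3 + 9*c*s^3 + 9*d*p*q*s" unfolding assms(2-5) by (simp add: algebra_simps)
  finally show ?thesis using assms(1) by simp
qed

lemma partB:
  assumes h1: "\<alpha>1^3 = 9*a - \<i> * complex_of_real (sqrt 3) * b"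
    and h2: "\<alpha>2^3 = 9*a + \<i> * complex_of_real (sqrt 3) * b"
    and h3: "- \<alpha>1 * \<alpha>2 * \<gamma> = 3*d" and h4: "\<gamma>^3 = 9*c"
  shows "9 * cubicf a b c d x1 x2 x3 =
                  (\<alpha>1 * (x1 + omega^2 * x2 + omega * x3) + \<gamma> * (x1 + x2 + x3)
                     + \<alpha>2 * (x1 + omega * x2 + omega^2 * x3))
                * (\<alpha>1 * (omega^2 * x1 + omega * x2 + x3) + \<gamma> * (x1 + x2 + x3)
                     + \<alpha>2 * (omega * x1 + omega^2 * x2 + x3))
                * (\<alpha>1 * (omega * x1 + x2 + omega^2 * x3) + \<gamma> * (x1 + x2 + x3)
                     + \<alpha>2 * (omega^2 * x1 + x2 + omega * x3))"
proof -
  define u where "u = \<alpha>1 * (x1 + omega^2 * x2 + omega * x3)"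
  define v where "v = \<gamma> * (x1 + x2 + x3)"
  define w where "w = \<alpha>2 * (x1 + omega * x2 + omega^2 * x3)"
  have om3: "omega^3 = 1" using om by algebra
  have tB: "\<alpha>1 * (omega^2 * x1 + omega * x2 + x3) + \<gamma> * (x1 + x2 + x3)
                     + \<alpha>2 * (omega * x1 + omega^2 * x2 + x3) = omega^2*u + v + omega*w"
    unfolding u_def v_def w_def using om by algebra
  have tC: "\<alpha>1 * (omega * x1 + x2 + omega^2 * x3) + \<gamma> * (x1 + x2 + x3)
                     + \<alpha>2 * (omega^2 * x1 + x2 + omega * x3) = omega*u + v + omega^2*w"
    unfolding u_def v_def w_def using om by algebra
  have "9 * cubicf a b c d x1 x2 x3 = u^3+v^3+w^3-3*u*v*w"
    unfolding u_def v_def w_def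
    by (rule aux[OF key[of a b c d x1 x2 x3] h1[unfolded isq] h2[unfolded isq] h3 h4])
  also have "\<dots> = (u+v+w)*(omega^2*u + v + omega*w)*(omega*u + v + omega^2*w)"
    by (rule triple[symmetric])
  finally show ?thesis unfolding tB tC unfolding u_def v_def w_def .
qed

lemma partC:
  assumes E: "(27 * a^2 + b^2) * c + d^3 = 0"
  shows "\<exists>\<alpha>1 \<alpha>2 \<gamma> :: complex.
               \<alpha>1^3 = 9*a - \<i> * complex_of_real (sqrt 3) * b \<and>
               \<alpha>2^3 = 9*a + \<i> * complex_of_real (sqrt 3) * b \<and>
               - \<alpha>1 * \<alpha>2 * \<gamma> = 3*d \<and> \<gamma>^3 = 9*c"
proof -
  define k where "k = \<i> * complex_of_real (sqrt 3)"
  have k2: "k^2 = -3" unfolding k_def by (simp add: power_mult_distrib flip: of_real_power)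
  obtain \<alpha>1 where a1: "\<alpha>1^3 = 9*a - k*b" using cuberoot by blast
  obtain \<alpha>2 where a2: "\<alpha>2^3 = 9*a + k*b" using cuberoot by blast
  have pr: "(\<alpha>1*\<alpha>2)^3 = 3*(27*a^2+b^2)"
    unfolding power_mult_distrib a1 a2 using k2 by algebra
  show ?thesis
  proof (cases "\<alpha>1*\<alpha>2 = 0")
    case True
    have "3*(27*a^2+b^2) = 0" using pr unfolding True by simp
    then have "27*a^2+b^2 = 0" by (subst (asm) mult_eq_0_iff) simp
    then have "d^3 = 0" using E by simp
    then have d: "d = 0" by simp
    obtain \<gamma> where "\<gamma>^3 = 9*c" using cuberoot by blast
    then show ?thesis using a1 a2 True d unfolding k_def
      by (intro exI[of _ \<alpha>1] exI[of _ \<alpha>2] exI[of _ \<gamma>]) simp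
  next
    case False
    define \<gamma> where "\<gamma> = -3*d/(\<alpha>1*\<alpha>2)"
    have g: "- \<alpha>1 * \<alpha>2 * \<gamma> = 3*d" unfolding \<gamma>_def using False by (simp add: field_simps)
    have nz: "27*a^2+b^2 \<noteq> 0"
    proof
      assume "27*a^2+b^2 = 0"
      then have "(\<alpha>1*\<alpha>2)^3 = 0" unfolding pr by simp
      then show False using False by simp
    qed
    have g': "\<gamma>*(\<alpha>1*\<alpha>2) = -3*d" using g by algebra
    have "\<gamma>^3 * (\<alpha>1*\<alpha>2)^3 = (-3*d)^3" unfolding g'[symmetric] by (simp add: power_mult_distrib)
    then have "\<gamma>^3 * (3*(27*a^2+b^2)) = 9*c*(3*(27*a^2+b^2))" unfolding pr using E by algebra
    moreover have nz3: "3*(27*a^2+b^2) \<noteq> 0" using nz by (metis mult_eq_0_iff zero_neq_numeral)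
    ultimately have "\<gamma>^3 = 9*c" using mult_right_cancel[OF nz3] by blast
    then show ?thesis using a1 a2 g unfolding k_def by blast
  qed
qed



lemma suff:
  assumes "(a = 0 \<and> b = 0 \<and> c = 0) \<or> (27 * a^2 + b^2) * c + d^3 = 0"
  shows "completely_reducible (cubicf a b c d)"
  using assms
proof
  assume h: "a = 0 \<and> b = 0 \<and> c = 0"
  show ?thesis unfolding completely_reducible_def
    apply (rule exI[of _ d], rule exI[of _ d], rule exI[of _ d])
    apply (rule exI[of _ 1], rule exI[of _ omega], rule exI[of _ "omega^2"])
    apply (rule exI[of _ 1], rule exI[of _ "omega^2"], rule exI[of _ omega])
    using h by (simp add: partA algebra_simps)
next
  assume E: "(27 * a^2 + b^2) * c + d^3 = 0"
  obtain \<alpha>1 \<alpha>2 \<gamma> where al: "\<alpha>1^3 = 9*a - \<i> * complex_of_real (sqrt 3) * b"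
    "\<alpha>2^3 = 9*a + \<i> * complex_of_real (sqrt 3) * b"
    "- \<alpha>1 * \<alpha>2 * \<gamma> = 3*d" "\<gamma>^3 = 9*c"
    using partC[OF E] by blast
  define c1 where "c1 = (\<alpha>1+\<gamma>+\<alpha>2)/9"
  define c2 where "c2 = (\<alpha>1*omega^2+\<gamma>+\<alpha>2*omega)/9"
  define c3 where "c3 = (\<alpha>1*omega+\<gamma>+\<alpha>2*omega^2)/9"
  have c: "9*c1 = \<alpha>1+\<gamma>+\<alpha>2" "9*c2 = \<alpha>1*omega^2+\<gamma>+\<alpha>2*omega" "9*c3 = \<alpha>1*omega+\<gamma>+\<alpha>2*omega^2"
    by (simp_all add: c1_def c2_def c3_def)
  show ?thesis unfolding completely_reducible_def
  proof (intro exI allI)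
    fix x1 x2 x3
    have h: "9 * cubicf a b c d x1 x2 x3 =
                  (\<alpha>1 * (x1 + omega^2 * x2 + omega * x3) + \<gamma> * (x1 + x2 + x3)
                     + \<alpha>2 * (x1 + omega * x2 + omega^2 * x3))
                * (\<alpha>1 * (omega^2 * x1 + omega * x2 + x3) + \<gamma> * (x1 + x2 + x3)
                     + \<alpha>2 * (omega * x1 + omega^2 * x2 + x3))
                * (\<alpha>1 * (omega * x1 + x2 + omega^2 * x3) + \<gamma> * (x1 + x2 + x3)
                     + \<alpha>2 * (omega^2 * x1 + x2 + omega * x3))"
      by (rule partB[OF al])
    have "9 * cubicf a b c d x1 x2 x3 = 9 * ((c1*x1+c2*x2+c3*x3)
       * ((\<alpha>1*omega^2+\<gamma>+\<alpha>2*omega)*x1 + (\<alpha>1*omega+\<gamma>+\<alpha>2*omega^2)*x2 + (\<alpha>1+\<gamma>+\<alpha>2)*x3)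
       * ((\<alpha>1*omega+\<gamma>+\<alpha>2*omega^2)*x1 + (\<alpha>1+\<gamma>+\<alpha>2)*x2 + (\<alpha>1*omega^2+\<gamma>+\<alpha>2*omega)*x3))"
      unfolding h using c by algebra
    then show "cubicf a b c d x1 x2 x3 = (c1*x1+c2*x2+c3*x3)
       * ((\<alpha>1*omega^2+\<gamma>+\<alpha>2*omega)*x1 + (\<alpha>1*omega+\<gamma>+\<alpha>2*omega^2)*x2 + (\<alpha>1+\<gamma>+\<alpha>2)*x3)
       * ((\<alpha>1*omega+\<gamma>+\<alpha>2*omega^2)*x1 + (\<alpha>1+\<gamma>+\<alpha>2)*x2 + (\<alpha>1*omega^2+\<gamma>+\<alpha>2*omega)*x3)"
      by (subst (asm) mult_left_cancel) simp_all
  qed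
qed

theorem theorem11p1:
  fixes a b c d :: complex
  shows "(completely_reducible (cubicf a b c d) \<longleftrightarrow>
            (a = 0 \<and> b = 0 \<and> c = 0) \<or> (27 * a^2 + b^2) * c + d^3 = 0)
       \<and> (a = 0 \<and> b = 0 \<and> c = 0 \<longrightarrow>
            (\<forall>x1 x2 x3. cubicf a b c d x1 x2 x3 =
               d * (x1 + x2 + x3) * (x1 + omega * x2 + omega^2 * x3)
                 * (x1 + omega^2 * x2 + omega * x3)))
       \<and> ((27 * a^2 + b^2) * c + d^3 = 0 \<longrightarrow>
            (\<exists>\<alpha>1 \<alpha>2 \<gamma> :: complex.
               \<alpha>1^3 = 9*a - \<i> * complex_of_real (sqrt 3) * b \<and>
               \<alpha>2^3 = 9*a + \<i> * complex_of_real (sqrt 3) * b \<and>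
               - \<alpha>1 * \<alpha>2 * \<gamma> = 3*d \<and> \<gamma>^3 = 9*c)
          \<and> (\<forall>\<alpha>1 \<alpha>2 \<gamma> :: complex.
               \<alpha>1^3 = 9*a - \<i> * complex_of_real (sqrt 3) * b \<and>
               \<alpha>2^3 = 9*a + \<i> * complex_of_real (sqrt 3) * b \<and>
               - \<alpha>1 * \<alpha>2 * \<gamma> = 3*d \<and> \<gamma>^3 = 9*c \<longrightarrow>
               (\<forall>x1 x2 x3. 9 * cubicf a b c d x1 x2 x3 =
                  (\<alpha>1 * (x1 + omega^2 * x2 + omega * x3) + \<gamma> * (x1 + x2 + x3)
                     + \<alpha>2 * (x1 + omega * x2 + omega^2 * x3))
                * (\<alpha>1 * (omega^2 * x1 + omega * x2 + x3) + \<gamma> * (x1 + x2 + x3)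
                     + \<alpha>2 * (omega * x1 + omega^2 * x2 + x3))
                * (\<alpha>1 * (omega * x1 + x2 + omega^2 * x3) + \<gamma> * (x1 + x2 + x3)
                     + \<alpha>2 * (omega^2 * x1 + x2 + omega * x3)))))"
proof (intro conjI impI allI)
  show "completely_reducible (cubicf a b c d) \<longleftrightarrow>
            (a = 0 \<and> b = 0 \<and> c = 0) \<or> (27 * a^2 + b^2) * c + d^3 = 0"
  proof
    assume "completely_reducible (cubicf a b c d)"
    then obtain u1 u2 u3 v1 v2 v3 w1 w2 w3 where
      "\<forall>x1 x2 x3. cubicf a b c d x1 x2 x3 = (u1*x1+u2*x2+u3*x3)*(v1*x1+v2*x2+v3*x3)*(w1*x1+w2*x2+w3*x3)"
      unfolding completely_reducible_def by blast
    then show "(a = 0 \<and> b = 0 \<and> c = 0) \<or> (27 * a^2 + b^2) * c + d^3 = 0" by (rule nec)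
  next
    assume "(a = 0 \<and> b = 0 \<and> c = 0) \<or> (27 * a^2 + b^2) * c + d^3 = 0"
    then show "completely_reducible (cubicf a b c d)" by (rule suff)
  qed
next
  fix x1 x2 x3
  assume "a = 0 \<and> b = 0 \<and> c = 0"
  then show "cubicf a b c d x1 x2 x3 =
               d * (x1 + x2 + x3) * (x1 + omega * x2 + omega^2 * x3)
                 * (x1 + omega^2 * x2 + omega * x3)" using partA by simp
next
  assume "(27 * a^2 + b^2) * c + d^3 = 0"
  then show "\<exists>\<alpha>1 \<alpha>2 \<gamma> :: complex.
               \<alpha>1^3 = 9*a - \<i> * complex_of_real (sqrt 3) * b \<and>
               \<alpha>2^3 = 9*a + \<i> * complex_of_real (sqrt 3) * b \<and>
               - \<alpha>1 * \<alpha>2 * \<gamma> = 3*d \<and> \<gamma>^3 = 9*c" by (rule partC)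
next
  fix \<alpha>1 \<alpha>2 \<gamma> x1 x2 x3
  assume "\<alpha>1^3 = 9*a - \<i> * complex_of_real (sqrt 3) * b \<and>
               \<alpha>2^3 = 9*a + \<i> * complex_of_real (sqrt 3) * b \<and>
               - \<alpha>1 * \<alpha>2 * \<gamma> = 3*d \<and> \<gamma>^3 = 9*c"
  then show "9 * cubicf a b c d x1 x2 x3 =
                  (\<alpha>1 * (x1 + omega^2 * x2 + omega * x3) + \<gamma> * (x1 + x2 + x3)
                     + \<alpha>2 * (x1 + omega * x2 + omega^2 * x3))
                * (\<alpha>1 * (omega^2 * x1 + omega * x2 + x3) + \<gamma> * (x1 + x2 + x3)
                     + \<alpha>2 * (omega * x1 + omega^2 * x2 + x3))
                * (\<alpha>1 * (omega * x1 + x2 + omega^2 * x3) + \<gamma> * (x1 + x2 + x3)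
                     + \<alpha>2 * (omega^2 * x1 + x2 + omega * x3))"
    using partB by blast
qed

end
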